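(* Let $\mathcal{C}=\{\mathcal{N}_1,\dots,\mathcal{N}_k\}$ be a clustering of a finite set of elements into $k$ (possibly overlapping) clusters, every element belonging to at least one cluster. If $\mathcal{N}_i\setminus\bigcup_{j\neq i}\mathcal{N}_j\neq\emptyset$ for all $i\in[k]$, then $\mathcal{C}$ is the only valid clustering (up to relabeling) that is consistent with the entire query matrix.
   Context: The query matrix has $(i,j)$ entry $1$ if elements $i,j$ belong to a common cluster and $0$ otherwise. A valid clustering consistent with the query matrix is a clustering into $k$ clusters whose query matrix coincides with the given one. *)

theory Defs
  imports Main
begin

definition valid_clustering :: "'a set \<Rightarrow> nat \<Rightarrow> (nat \<Rightarrow> 'a set) \<Rightarrow> bool" where
  "valid_clustering V k N \<longleftrightarrow> (\<forall>i<k. N i \<subseteq> V) \<and> (\<Union>i<k. N i) = V"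

definition query_matrix :: "nat \<Rightarrow> (nat \<Rightarrow> 'a set) \<Rightarrow> 'a \<Rightarrow> 'a \<Rightarrow> nat" where
  "query_matrix k N x y = (if \<exists>i<k. x \<in> N i \<and> y \<in> N i then 1 else 0)"

end

theory Submission
  imports Defs
begin

theorem theorem11:
  fixes V :: "'a set" and k :: nat and N :: "nat \<Rightarrow> 'a set"
  assumes "finite V"
    and "valid_clustering V k N"
    and "\<forall>i<k. N i - (\<Union>j\<in>{..<k} - {i}. N j) \<noteq> {}"
  shows "\<forall>N'. valid_clustering V k N' \<and>
           (\<forall>x\<in>V. \<forall>y\<in>V. query_matrix k N' x y = query_matrix k N x y)
         \<longrightarrow> (\<exists>\<sigma>. bij_betw \<sigma> {..<k} {..<k} \<and> (\<forall>i<k. N' i = N (\<sigma> i)))"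
proof (intro allI impI)
  fix N' assume H: "valid_clustering V k N' \<and>
           (\<forall>x\<in>V. \<forall>y\<in>V. query_matrix k N' x y = query_matrix k N x y)"
  have VN: "\<forall>i<k. N i \<subseteq> V" "(\<Union>i<k. N i) = V" using assms(2) by (auto simp: valid_clustering_def)
  have VN': "\<forall>i<k. N' i \<subseteq> V" "(\<Union>i<k. N' i) = V" using H by (auto simp: valid_clustering_def)
  have Q: "\<And>x y. x \<in> V \<Longrightarrow> y \<in> V \<Longrightarrow> (\<exists>i<k. x \<in> N' i \<and> y \<in> N' i) \<longleftrightarrow> (\<exists>i<k. x \<in> N i \<and> y \<in> N i)"
  proof -
    fix x y assume "x \<in> V" "y \<in> V"
    then have "query_matrix k N' x y = query_matrix k N x y" using H by blast
    then show "?thesis x y" unfolding query_matrix_def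
      by (cases "\<exists>i<k. x \<in> N' i \<and> y \<in> N' i"; cases "\<exists>i<k. x \<in> N i \<and> y \<in> N i") (simp_all only: if_True if_False zero_neq_one one_neq_zero)
  qed
  have "\<forall>i<k. \<exists>u. u \<in> N i \<and> (\<forall>j<k. j \<noteq> i \<longrightarrow> u \<notin> N j)" 
  proof (intro allI impI)
    fix i assume i: "i<k"
    then obtain u where "u \<in> N i - (\<Union>j\<in>{..<k} - {i}. N j)" using assms(3) by blast
    then show "\<exists>u. u \<in> N i \<and> (\<forall>j<k. j \<noteq> i \<longrightarrow> u \<notin> N j)" by auto
  qed
  then obtain u where u: "\<And>i. i<k \<Longrightarrow> u i \<in> N i \<and> (\<forall>j<k. j \<noteq> i \<longrightarrow> u i \<notin> N j)" by metis
  have uV: "\<And>i. i<k \<Longrightarrow> u i \<in> V" using u VN by blast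
  have "\<forall>i<k. \<exists>m<k. u i \<in> N' m" using uV VN' by blast
  then obtain c where c: "\<And>i. i<k \<Longrightarrow> c i < k \<and> u i \<in> N' (c i)" by metis
  have co: "\<And>i j m. i<k \<Longrightarrow> j<k \<Longrightarrow> m<k \<Longrightarrow> u i \<in> N' m \<Longrightarrow> u j \<in> N' m \<Longrightarrow> i = j"
  proof -
    fix i j m assume a: "i<k" "j<k" "m<k" "u i \<in> N' m" "u j \<in> N' m"
    then have "\<exists>l<k. u i \<in> N l \<and> u j \<in> N l" using Q[of "u i" "u j"] uV by blast
    then show "i = j" using u a by blast
  qed
  have inj: "inj_on c {..<k}"
    by (rule inj_onI) (metis c co lessThan_iff)
  have cimg: "c ` {..<k} \<subseteq> {..<k}" using c by auto
  have bc: "bij_betw c {..<k} {..<k}"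
    using inj cimg by (simp add: bij_betw_def endo_inj_surj)
  have eq: "\<And>i. i<k \<Longrightarrow> N' (c i) = N i"
  proof
    fix i assume i: "i<k"
    show "N' (c i) \<subseteq> N i"
    proof
      fix x assume x: "x \<in> N' (c i)"
      have "x \<in> V" using x c i VN' by blast
      then have "\<exists>l<k. x \<in> N l \<and> u i \<in> N l" using Q[of x "u i"] uV i c x by blast
      then show "x \<in> N i" using u i by blast
    qed
    show "N i \<subseteq> N' (c i)"
    proof
      fix x assume x: "x \<in> N i"
      have "x \<in> V" using x i VN by blast
      then obtain m where m: "m<k" "x \<in> N' m" "u i \<in> N' m" using Q[of x "u i"] uV i x u by blast
      have "m \<in> c ` {..<k}" using bc m(1) by (simp add: bij_betw_def)
      then obtain j where j: "j<k" "m = c j" by auto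
      have "j = i" using co[of j i m] c j m i by blast
      then show "x \<in> N' (c i)" using m j by simp
    qed
  qed
  define \<sigma> where "\<sigma> = inv_into {..<k} c"
  have bs: "bij_betw \<sigma> {..<k} {..<k}" unfolding \<sigma>_def using bc by (rule bij_betw_inv_into)
  have "\<forall>i<k. N' i = N (\<sigma> i)"
  proof (intro allI impI)
    fix i assume i: "i<k"
    have s: "\<sigma> i < k" using bs i by (auto simp: bij_betw_def)
    have "c (\<sigma> i) = i" unfolding \<sigma>_def using bc i by (simp add: bij_betw_inv_into_right)
    then show "N' i = N (\<sigma> i)" using eq[OF s] by simp
  qed
  then show "\<exists>\<sigma>. bij_betw \<sigma> {..<k} {..<k} \<and> (\<forall>i<k. N' i = N (\<sigma> i))" using bs by blast
qed

end
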